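(* Let $\mathcal F$ be a Finsler function on $\mathbb R^n$, and let $((x^i),(y^i))$ be the coordinates on $T\mathbb R^n$ induced by the canonical coordinates of $\mathbb R^n$. Then $(\mathbb R^n,\mathcal F)$ is a Minkowski space (i.e. $\mathcal F(p,v)$ does not depend on $p$) if and only if $$\frac{\partial^2\mathcal F^2}{\partial x^k\partial y^i}\,y^k=\frac12\,\frac{\partial^2\mathcal F^2}{\partial x^i\partial y^k}\,y^k,\qquad i=1,\dots,n,$$ holds on $\mathbb R^n\times(\mathbb R^n\setminus\{0\})$.
   Context: A Finsler function on $\mathbb R^n$ is $\mathcal F\colon\mathbb R^n\times\mathbb R^n\to\mathbb R$ smooth and positive on $\{(p,v):v\neq0\}$, positively $1$-homogeneous in $v$, and strongly convex ($\partial^2\mathcal F^2/\partial y^i\partial y^j$ positive definite for $v\ne0$). Summation over repeated indices. *)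

theory Defs
  imports "HOL-Analysis.Analysis"
begin

definition pderiv_dir :: "('a::euclidean_space \<Rightarrow> real) \<Rightarrow> 'a \<Rightarrow> 'a \<Rightarrow> real" where
  "pderiv_dir f b z = frechet_derivative f (at z) b"

fun Ck_on :: "nat \<Rightarrow> 'a::euclidean_space set \<Rightarrow> ('a \<Rightarrow> real) \<Rightarrow> bool" where
  "Ck_on 0 S f = continuous_on S f"
| "Ck_on (Suc k) S f = ((\<forall>z\<in>S. f differentiable (at z)) \<and>
       (\<forall>b\<in>Basis. Ck_on k S (pderiv_dir f b)))"

definition smooth_on :: "'a::euclidean_space set \<Rightarrow> ('a \<Rightarrow> real) \<Rightarrow> bool" where
  "smooth_on S f = (\<forall>k. Ck_on k S f)"

text \<open>Coordinate directions on T R^n = R^n x R^n: dx k is d/dx^k, dy i is d/dy^i.\<close>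
definition dx :: "'n::finite \<Rightarrow> (real^'n) \<times> (real^'n)" where
  "dx k = (axis k 1, 0)"
definition dy :: "'n::finite \<Rightarrow> (real^'n) \<times> (real^'n)" where
  "dy i = (0, axis i 1)"

definition slit :: "((real^'n) \<times> (real^'n)) set" where
  "slit = {z. snd z \<noteq> 0}"

definition finsler_function :: "((real^'n) \<times> (real^'n) \<Rightarrow> real) \<Rightarrow> bool" where
  "finsler_function F \<longleftrightarrow>
     smooth_on slit F \<and>
     (\<forall>p v. v \<noteq> 0 \<longrightarrow> F (p, v) > 0) \<and>
     (\<forall>p v (c::real). c > 0 \<longrightarrow> F (p, c *\<^sub>R v) = c * F (p, v)) \<and>
     (\<forall>p v. v \<noteq> 0 \<longrightarrow> (\<forall>\<xi>::real^'n. \<xi> \<noteq> 0 \<longrightarrow>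
        (\<Sum>i\<in>UNIV. \<Sum>j\<in>UNIV.
           pderiv_dir (pderiv_dir (\<lambda>z. (F z)\<^sup>2) (dy j)) (dy i) (p, v) * \<xi>$i * \<xi>$j) > 0))"

definition minkowski :: "((real^'n) \<times> (real^'n) \<Rightarrow> real) \<Rightarrow> bool" where
  "minkowski F \<longleftrightarrow> (\<forall>p q v. F (p, v) = F (q, v))"

end

theory Submission
  imports Defs
begin

lemma line_deriv:
  fixes f :: "'a::euclidean_space \<Rightarrow> real"
  assumes "f differentiable (at (x + s *\<^sub>R u))"
  shows "((\<lambda>s. f (x + s *\<^sub>R u)) has_real_derivative pderiv_dir f u (x + s *\<^sub>R u)) (at s)"
proof -
  let ?f' = "frechet_derivative f (at (x + s *\<^sub>R u))"
  have 1: "(f has_derivative ?f') (at (x + s*\<^sub>R u))" using assms frechet_derivative_works by blast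
  have 2: "((\<lambda>s. x + s *\<^sub>R u) has_derivative (\<lambda>h. h *\<^sub>R u)) (at s)"
    by (auto intro!: derivative_eq_intros)
  have 3: "((\<lambda>s. f (x + s*\<^sub>R u)) has_derivative (\<lambda>h. ?f' (h *\<^sub>R u))) (at s)"
    using has_derivative_compose[OF 2 1] by (simp add: o_def)
  have lin: "linear ?f'" using assms linear_frechet_derivative by blast
  have "(\<lambda>h. ?f' (h *\<^sub>R u)) = (\<lambda>h. ?f' u * h)"
    using linear_scale[OF lin] by (auto simp: mult.commute)
  then show ?thesis using 3 by (simp add: has_field_derivative_def pderiv_dir_def)
qed

lemma pd_local:
  assumes "open S" "z \<in> S" "\<And>x. x \<in> S \<Longrightarrow> f x = g x"
  shows "pderiv_dir f b z = pderiv_dir g b z"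
proof -
  have "(\<lambda>f'. (f has_derivative f') (at z)) = (\<lambda>f'. (g has_derivative f') (at z))"
    using has_derivative_transform_within_open[OF _ assms(1,2), of f _ UNIV g]
      has_derivative_transform_within_open[OF _ assms(1,2), of g _ UNIV f] assms(3)
    by (auto intro!: ext)
  then show ?thesis unfolding pderiv_dir_def frechet_derivative_def by simp
qed

lemma near_pt:
  fixes z u w :: "'a::real_normed_vector"
  assumes "0 \<le> a" "a \<le> t" "0 \<le> b" "b \<le> t"
  shows "dist z (z + a *\<^sub>R u + b *\<^sub>R w) \<le> t * (norm u + norm w)"
proof -
  have "dist z (z + a *\<^sub>R u + b *\<^sub>R w) = norm (a *\<^sub>R u + b *\<^sub>R w)"
    by (simp add: dist_norm algebra_simps norm_minus_commute[of "- (a *\<^sub>R u)"])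
  also have "\<dots> \<le> norm (a *\<^sub>R u) + norm (b *\<^sub>R w)" by (rule norm_triangle_ineq)
  also have "\<dots> = a * norm u + b * norm w" using assms by simp
  also have "\<dots> \<le> t * norm u + t * norm w"
    using assms by (intro add_mono mult_right_mono) auto
  finally show ?thesis by (simp add: algebra_simps)
qed

lemma schwarz_half:
  fixes f :: "'a::euclidean_space \<Rightarrow> real"
  assumes df: "\<forall>x\<in>ball z e. f differentiable (at x)"
  and dg: "\<forall>x\<in>ball z e. pderiv_dir f u differentiable (at x)"
  and t: "0 < t" "t * (norm u + norm w) < e"
  shows "\<exists>\<xi>. dist z \<xi> \<le> t * (norm u + norm w) \<and>
     f (z + t *\<^sub>R w + t *\<^sub>R u) - f (z + t *\<^sub>R w) - f (z + t *\<^sub>R u) + f z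
       = t^2 * pderiv_dir (pderiv_dir f u) w \<xi>"
proof -
  let ?B = "t * (norm u + norm w)"
  have inb: "z + a *\<^sub>R u + b *\<^sub>R w \<in> ball z e" if "0 \<le> a" "a \<le> t" "0 \<le> b" "b \<le> t" for a b
    using near_pt[OF that, of z u w] t by simp
  define g where "g s = f ((z + t *\<^sub>R w) + s *\<^sub>R u) - f (z + s *\<^sub>R u)" for s
  have "DERIV g s :> pderiv_dir f u ((z + t *\<^sub>R w) + s *\<^sub>R u) - pderiv_dir f u (z + s *\<^sub>R u)"
    if "0 \<le> s" "s \<le> t" for s
  proof -
    have p1: "(z + t *\<^sub>R w) + s *\<^sub>R u \<in> ball z e" using inb[of s t] that t by (simp add: algebra_simps)
    have p2: "z + s *\<^sub>R u \<in> ball z e" using inb[of s 0] that t by simp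
    show ?thesis unfolding g_def
      by (intro DERIV_diff line_deriv) (use df p1 p2 in auto)
  qed
  from MVT2[OF t(1) this] obtain \<sigma> where s: "0 < \<sigma>" "\<sigma> < t"
    "g t - g 0 = (t - 0) * (pderiv_dir f u ((z + t *\<^sub>R w) + \<sigma> *\<^sub>R u) - pderiv_dir f u (z + \<sigma> *\<^sub>R u))"
    by auto
  define h where "h r = pderiv_dir f u ((z + \<sigma> *\<^sub>R u) + r *\<^sub>R w)" for r
  have "DERIV h r :> pderiv_dir (pderiv_dir f u) w ((z + \<sigma> *\<^sub>R u) + r *\<^sub>R w)"
    if "0 \<le> r" "r \<le> t" for r
  proof -
    have p1: "(z + \<sigma> *\<^sub>R u) + r *\<^sub>R w \<in> ball z e" using inb[of \<sigma> r] that s by simp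
    show ?thesis unfolding h_def
      by (intro line_deriv) (use dg p1 in auto)
  qed
  from MVT2[OF t(1) this] obtain \<tau> where r: "0 < \<tau>" "\<tau> < t"
    "h t - h 0 = (t - 0) * pderiv_dir (pderiv_dir f u) w ((z + \<sigma> *\<^sub>R u) + \<tau> *\<^sub>R w)"
    by auto
  have e1: "h t = pderiv_dir f u ((z + t *\<^sub>R w) + \<sigma> *\<^sub>R u)" unfolding h_def
    by (simp add: algebra_simps)
  have e2: "h 0 = pderiv_dir f u (z + \<sigma> *\<^sub>R u)" unfolding h_def by simp
  have "f (z + t *\<^sub>R w + t *\<^sub>R u) - f (z + t *\<^sub>R w) - f (z + t *\<^sub>R u) + f z = g t - g 0"
    unfolding g_def by simp
  also have "\<dots> = t * (h t - h 0)" using s(3) e1 e2 by simp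
  also have "\<dots> = t^2 * pderiv_dir (pderiv_dir f u) w ((z + \<sigma> *\<^sub>R u) + \<tau> *\<^sub>R w)"
    using r(3) by (simp add: power2_eq_square)
  finally show ?thesis
    using near_pt[of \<sigma> t \<tau> z u w] s r by (intro exI[of _ "(z + \<sigma> *\<^sub>R u) + \<tau> *\<^sub>R w"]) auto
qed

lemma abs_contra:
  fixes x y a b :: real
  assumes "\<bar>x - a\<bar> < \<bar>a - b\<bar> / 2" "\<bar>y - b\<bar> < \<bar>a - b\<bar> / 2" "x = y"
  shows False
  using assms by (cases "a \<le> b"; cases "x \<le> a"; cases "y \<le> b") (auto simp: abs_if split: if_splits)

lemma schwarz:
  fixes f :: "'a::euclidean_space \<Rightarrow> real"
  assumes S: "open S" "z \<in> S"
  and d1: "\<forall>x\<in>S. f differentiable (at x)"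
  and d2: "\<forall>x\<in>S. pderiv_dir f u differentiable (at x)"
  and d3: "\<forall>x\<in>S. pderiv_dir f w differentiable (at x)"
  and c1: "continuous_on S (pderiv_dir (pderiv_dir f u) w)"
  and c2: "continuous_on S (pderiv_dir (pderiv_dir f w) u)"
  shows "pderiv_dir (pderiv_dir f u) w z = pderiv_dir (pderiv_dir f w) u z"
proof (rule ccontr)
  let ?A = "pderiv_dir (pderiv_dir f u) w" and ?B = "pderiv_dir (pderiv_dir f w) u"
  assume ne: "?A z \<noteq> ?B z"
  define \<epsilon> where "\<epsilon> = \<bar>?A z - ?B z\<bar> / 2"
  have ep: "\<epsilon> > 0" using ne unfolding \<epsilon>_def by simp
  obtain e where e: "e > 0" "ball z e \<subseteq> S" using S open_contains_ball by blast
  obtain \<delta>1 where \<delta>1: "\<delta>1 > 0" "\<forall>x\<in>S. dist x z < \<delta>1 \<longrightarrow> dist (?A x) (?A z) < \<epsilon>"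
    using c1 S(2) ep unfolding continuous_on_iff by blast
  obtain \<delta>2 where \<delta>2: "\<delta>2 > 0" "\<forall>x\<in>S. dist x z < \<delta>2 \<longrightarrow> dist (?B x) (?B z) < \<epsilon>"
    using c2 S(2) ep unfolding continuous_on_iff by blast
  define m where "m = min e (min \<delta>1 \<delta>2)"
  define M where "M = norm u + norm w + 1"
  have m: "m > 0" "m \<le> e" "m \<le> \<delta>1" "m \<le> \<delta>2" using e \<delta>1 \<delta>2 unfolding m_def by auto
  have M: "M > 0" unfolding M_def by (simp add: add_nonneg_pos)
  define t where "t = m / (2 * M)"
  have t: "t > 0" unfolding t_def using m M by simp
  have "t * (norm u + norm w) < t * M" using t unfolding M_def by simp
  also have "t * M = m / 2" unfolding t_def using M by simp
  finally have tl: "t * (norm u + norm w) < m / 2" .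
  have tl2: "t * (norm w + norm u) < m / 2" using tl by (simp add: add.commute)
  have tle: "t * (norm u + norm w) < e" "t * (norm w + norm u) < e" using tl tl2 m by linarith+
  have bd1: "\<forall>x\<in>ball z e. f differentiable (at x)" using d1 e by auto
  have bd2: "\<forall>x\<in>ball z e. pderiv_dir f u differentiable (at x)" using d2 e by auto
  have bd3: "\<forall>x\<in>ball z e. pderiv_dir f w differentiable (at x)" using d3 e by auto
  obtain \<xi> where \<xi>: "dist z \<xi> \<le> t * (norm u + norm w)"
    "f (z + t *\<^sub>R w + t *\<^sub>R u) - f (z + t *\<^sub>R w) - f (z + t *\<^sub>R u) + f z = t^2 * ?A \<xi>"
    using schwarz_half[OF bd1 bd2 t, of w] tle by blast
  obtain \<eta> where \<eta>: "dist z \<eta> \<le> t * (norm w + norm u)"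
    "f (z + t *\<^sub>R u + t *\<^sub>R w) - f (z + t *\<^sub>R u) - f (z + t *\<^sub>R w) + f z = t^2 * ?B \<eta>"
    using schwarz_half[OF bd1 bd3 t, of u] tle by blast
  have "t^2 * ?A \<xi> = t^2 * ?B \<eta>" using \<xi>(2) \<eta>(2) by (simp add: algebra_simps)
  then have eq: "?A \<xi> = ?B \<eta>" using t by simp
  have x1: "\<xi> \<in> S" "dist \<xi> z < \<delta>1" using \<xi>(1) tl m e(2) by (auto simp: dist_commute)
  have x2: "\<eta> \<in> S" "dist \<eta> z < \<delta>2" using \<eta>(1) tl2 m e(2) by (auto simp: dist_commute)
  have "dist (?A \<xi>) (?A z) < \<epsilon>" using \<delta>1 x1 by blast
  moreover have "dist (?B \<eta>) (?B z) < \<epsilon>" using \<delta>2 x2 by blast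
  ultimately show False using eq unfolding \<epsilon>_def dist_real_def by (metis abs_contra)
qed

lemma diff_cong:
  assumes "open S" "z \<in> S" "\<And>x. x \<in> S \<Longrightarrow> f x = g x" "f differentiable (at z)"
  shows "g differentiable (at z)"
proof -
  obtain f' where "(f has_derivative f') (at z)" using assms(4) unfolding differentiable_def by blast
  from has_derivative_transform_within_open[OF this assms(1,2) assms(3)]
  show ?thesis unfolding differentiable_def by blast
qed

lemma Ck_cong:
  assumes "open S" "\<And>x. x \<in> S \<Longrightarrow> f x = g x"
  shows "Ck_on k S f = Ck_on k S g"
  using assms(2)
proof (induction k arbitrary: f g)
  case 0
  then show ?case using continuous_on_cong[OF refl, of S f g] by simp
next
  case (Suc k)
  have d: "(f differentiable (at z)) \<longleftrightarrow> (g differentiable (at z))" if "z \<in> S" for z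
    using diff_cong[OF assms(1) that, of f g] diff_cong[OF assms(1) that, of g f] Suc.prems
    by metis
  have p: "Ck_on k S (pderiv_dir f b) = Ck_on k S (pderiv_dir g b)" for b
    by (rule Suc.IH) (rule pd_local[OF assms(1)], assumption, rule Suc.prems)
  show ?case using d p by (simp only: Ck_on.simps) blast
qed
lemma Ck_mono: "Ck_on (Suc k) S f \<Longrightarrow> Ck_on k S f"
proof (induction k arbitrary: f)
  case 0
  then show ?case
    by (auto intro!: continuous_at_imp_continuous_on differentiable_imp_continuous_within)
next
  case (Suc k)
  have a: "\<forall>z\<in>S. f differentiable (at z)" "\<forall>b\<in>Basis. Ck_on (Suc k) S (pderiv_dir f b)"
    using Suc.prems[unfolded Ck_on.simps(2)[of "Suc k"]] by blast+
  have "\<forall>b\<in>Basis. Ck_on k S (pderiv_dir f b)" using a(2) Suc.IH by blast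
  with a(1) show ?case unfolding Ck_on.simps(2)[of k] by blast
qed

lemma pd_add:
  assumes "f differentiable (at z)" "g differentiable (at z)"
  shows "pderiv_dir (\<lambda>x. f x + g x) b z = pderiv_dir f b z + pderiv_dir g b z"
proof -
  have d: "((\<lambda>x. f x + g x) has_derivative (\<lambda>h. frechet_derivative f (at z) h + frechet_derivative g (at z) h)) (at z)"
    using assms by (intro has_derivative_add frechet_derivative_works[THEN iffD1])
  note e = frechet_derivative_at[OF this]
  show ?thesis unfolding pderiv_dir_def e[symmetric] ..
qed

lemma pd_mult:
  assumes "f differentiable (at z)" "g differentiable (at z)"
  shows "pderiv_dir (\<lambda>x. f x * g x) b z = f z * pderiv_dir g b z + pderiv_dir f b z * g z"
proof -
  have d: "((\<lambda>x. f x * g x) has_derivative (\<lambda>h. f z * frechet_derivative g (at z) h + frechet_derivative f (at z) h * g z)) (at z)"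
    using assms by (intro has_derivative_mult frechet_derivative_works[THEN iffD1])
  note e = frechet_derivative_at[OF this]
  show ?thesis unfolding pderiv_dir_def e[symmetric] ..
qed

lemma Ck_add:
  assumes "open S"
  shows "Ck_on k S f \<Longrightarrow> Ck_on k S g \<Longrightarrow> Ck_on k S (\<lambda>x. f x + g x)"
proof (induction k arbitrary: f g)
  case 0
  then show ?case using continuous_on_add[of S f g] by simp
next
  case (Suc k)
  have af: "\<forall>z\<in>S. f differentiable (at z)" "\<forall>b\<in>Basis. Ck_on k S (pderiv_dir f b)"
    using Suc.prems(1)[unfolded Ck_on.simps(2)[of k]] by blast+
  have ag: "\<forall>z\<in>S. g differentiable (at z)" "\<forall>b\<in>Basis. Ck_on k S (pderiv_dir g b)"
    using Suc.prems(2)[unfolded Ck_on.simps(2)[of k]] by blast+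
  have "Ck_on k S (pderiv_dir (\<lambda>x. f x + g x) b)" if "b \<in> Basis" for b
  proof -
    have "Ck_on k S (\<lambda>x. pderiv_dir f b x + pderiv_dir g b x)"
      by (rule Suc.IH) (use af ag that in auto)
    moreover have "Ck_on k S (pderiv_dir (\<lambda>x. f x + g x) b) = Ck_on k S (\<lambda>x. pderiv_dir f b x + pderiv_dir g b x)"
      by (rule Ck_cong[OF assms]) (use af ag in \<open>intro pd_add; auto\<close>)
    ultimately show ?thesis by simp
  qed
  moreover have "\<forall>z\<in>S. (\<lambda>x. f x + g x) differentiable (at z)"
    using af ag by (auto intro: differentiable_add)
  ultimately show ?case unfolding Ck_on.simps(2)[of k] by blast
qed

lemma Ck_mult:
  assumes "open S"
  shows "Ck_on k S f \<Longrightarrow> Ck_on k S g \<Longrightarrow> Ck_on k S (\<lambda>x. f x * g x)"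
proof (induction k arbitrary: f g)
  case 0
  then show ?case using continuous_on_mult[of S f g] by simp
next
  case (Suc k)
  have af: "\<forall>z\<in>S. f differentiable (at z)" "\<forall>b\<in>Basis. Ck_on k S (pderiv_dir f b)"
    using Suc.prems(1)[unfolded Ck_on.simps(2)[of k]] by blast+
  have ag: "\<forall>z\<in>S. g differentiable (at z)" "\<forall>b\<in>Basis. Ck_on k S (pderiv_dir g b)"
    using Suc.prems(2)[unfolded Ck_on.simps(2)[of k]] by blast+
  have f0: "Ck_on k S f" "Ck_on k S g" using Ck_mono Suc.prems by blast+
  have "Ck_on k S (pderiv_dir (\<lambda>x. f x * g x) b)" if "b \<in> Basis" for b
  proof -
    have "Ck_on k S (\<lambda>x. f x * pderiv_dir g b x)" by (rule Suc.IH) (use f0 ag that in auto)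
    moreover have "Ck_on k S (\<lambda>x. pderiv_dir f b x * g x)" by (rule Suc.IH) (use f0 af that in auto)
    ultimately have "Ck_on k S (\<lambda>x. f x * pderiv_dir g b x + pderiv_dir f b x * g x)"
      by (rule Ck_add[OF assms])
    moreover have "Ck_on k S (pderiv_dir (\<lambda>x. f x * g x) b) = Ck_on k S (\<lambda>x. f x * pderiv_dir g b x + pderiv_dir f b x * g x)"
      by (rule Ck_cong[OF assms]) (use af ag in \<open>intro pd_mult; auto\<close>)
    ultimately show ?thesis by simp
  qed
  moreover have "\<forall>z\<in>S. (\<lambda>x. f x * g x) differentiable (at z)"
    using af ag by (auto intro: differentiable_mult)
  ultimately show ?case unfolding Ck_on.simps(2)[of k] by blast
qed

lemma smooth_mult: "open S \<Longrightarrow> smooth_on S f \<Longrightarrow> smooth_on S g \<Longrightarrow> smooth_on S (\<lambda>x. f x * g x)"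
  unfolding smooth_on_def using Ck_mult by blast

lemma smooth_pd: "smooth_on S f \<Longrightarrow> b \<in> Basis \<Longrightarrow> smooth_on S (pderiv_dir f b)"
  unfolding smooth_on_def using Ck_on.simps(2) by blast

lemma smooth_diff: "smooth_on S f \<Longrightarrow> z \<in> S \<Longrightarrow> f differentiable (at z)"
  unfolding smooth_on_def using Ck_on.simps(2) by blast

lemma smooth_cont: "smooth_on S f \<Longrightarrow> continuous_on S f"
  unfolding smooth_on_def using Ck_on.simps(1) by blast

lemma schwarz_smooth:
  assumes "open S" "z \<in> S" "smooth_on S f" "u \<in> Basis" "w \<in> Basis"
  shows "pderiv_dir (pderiv_dir f u) w z = pderiv_dir (pderiv_dir f w) u z"
  using assms
  by (intro schwarz[OF assms(1,2)]) (auto intro: smooth_diff smooth_pd smooth_cont)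

lemma dx_Basis: "dx k \<in> Basis"
  unfolding dx_def Basis_prod_def Basis_vec_def by auto
lemma dy_Basis: "dy k \<in> Basis"
  unfolding dy_def Basis_prod_def Basis_vec_def by auto

lemma open_slit: "open (slit :: ((real^'n) \<times> (real^'n)) set)"
  unfolding slit_def by (intro open_Collect_neq continuous_intros)

lemma vec_expand: "(h::real^'n) = (\<Sum>i\<in>UNIV. h $ i *\<^sub>R axis i 1)"
  by (simp add: vec_eq_iff sum_component axis_def) (simp add: if_distrib cong: if_cong)

lemma pair_expand_x: "((h::real^'n), (0::real^'n)) = (\<Sum>i\<in>UNIV. h $ i *\<^sub>R dx i)"
  by (simp add: dx_def prod_eq_iff fst_sum snd_sum) (rule vec_expand)

lemma pair_expand_y: "((0::real^'n), (h::real^'n)) = (\<Sum>i\<in>UNIV. h $ i *\<^sub>R dy i)"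
  by (simp add: dy_def prod_eq_iff fst_sum snd_sum) (rule vec_expand)

lemma fd_x:
  fixes f :: "(real^'n) \<times> (real^'n) \<Rightarrow> real"
  assumes "f differentiable (at z)"
  shows "frechet_derivative f (at z) (h, 0) = (\<Sum>i\<in>UNIV. h $ i * pderiv_dir f (dx i) z)"
proof -
  have lin: "linear (frechet_derivative f (at z))" using assms linear_frechet_derivative by blast
  show ?thesis
    unfolding pair_expand_x[of h] linear_sum[OF lin] linear_scale[OF lin] pderiv_dir_def by simp
qed

lemma fd_y:
  fixes f :: "(real^'n) \<times> (real^'n) \<Rightarrow> real"
  assumes "f differentiable (at z)"
  shows "frechet_derivative f (at z) (0, h) = (\<Sum>i\<in>UNIV. h $ i * pderiv_dir f (dy i) z)"
proof -
  have lin: "linear (frechet_derivative f (at z))" using assms linear_frechet_derivative by blast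
  show ?thesis
    unfolding pair_expand_y[of h] linear_sum[OF lin] linear_scale[OF lin] pderiv_dir_def by simp
qed

lemma pd_wsum:
  fixes G :: "'n \<Rightarrow> (real^'n) \<times> (real^'n) \<Rightarrow> real"
  assumes "\<And>k. G k differentiable (at z)"
  shows "pderiv_dir (\<lambda>z. \<Sum>k\<in>UNIV. snd z $ k * G k z) b z
     = (\<Sum>k\<in>UNIV. snd b $ k * G k z + snd z $ k * pderiv_dir (G k) b z)"
proof -
  have sn: "((\<lambda>z. snd z $ k) has_derivative (\<lambda>h. snd h $ k)) (at z)" for k :: 'n
    by (intro bounded_linear_imp_has_derivative bounded_linear_compose[OF bounded_linear_vec_nth]
        bounded_linear_snd)
  have "((\<lambda>z. \<Sum>k\<in>UNIV. snd z $ k * G k z) has_derivative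
      (\<lambda>h. \<Sum>k\<in>UNIV. snd z $ k * frechet_derivative (G k) (at z) h + snd h $ k * G k z)) (at z)"
    by (intro has_derivative_sum has_derivative_mult sn frechet_derivative_works[THEN iffD1] assms)
  note e = frechet_derivative_at[OF this]
  show ?thesis unfolding pderiv_dir_def e[symmetric] by (simp add: algebra_simps)
qed

lemma pd_diff:
  assumes "f differentiable (at z)" "g differentiable (at z)"
  shows "pderiv_dir (\<lambda>x. f x - g x) b z = pderiv_dir f b z - pderiv_dir g b z"
proof -
  have d: "((\<lambda>x. f x - g x) has_derivative (\<lambda>h. frechet_derivative f (at z) h - frechet_derivative g (at z) h)) (at z)"
    using assms by (intro has_derivative_diff frechet_derivative_works[THEN iffD1])
  note e = frechet_derivative_at[OF this]
  show ?thesis unfolding pderiv_dir_def e[symmetric] ..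
qed

lemma pd_cmult:
  assumes "f differentiable (at z)"
  shows "pderiv_dir (\<lambda>x. c * f x) b z = c * pderiv_dir f b z"
proof -
  have d: "((\<lambda>x. c * f x) has_derivative (\<lambda>h. c * frechet_derivative f (at z) h)) (at z)"
    using assms by (intro has_derivative_mult_right frechet_derivative_works[THEN iffD1])
  note e = frechet_derivative_at[OF this]
  show ?thesis unfolding pderiv_dir_def e[symmetric] ..
qed

lemma pd_const: "pderiv_dir (\<lambda>x. c) b z = 0"
  unfolding pderiv_dir_def by simp

lemma pd_zero_const:
  fixes H :: "'a::euclidean_space \<Rightarrow> real"
  assumes "H differentiable (at z)" "\<And>t. H (z + t *\<^sub>R u) = H z"
  shows "pderiv_dir H u z = 0"
proof -
  have "((\<lambda>t. H (z + t *\<^sub>R u)) has_real_derivative pderiv_dir H u (z + 0 *\<^sub>R u)) (at 0)"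
    by (rule line_deriv) (use assms in simp)
  then have "((\<lambda>t. H z) has_real_derivative pderiv_dir H u z) (at 0)" using assms(2) by simp
  moreover have "((\<lambda>t. H z) has_real_derivative 0) (at 0)" by simp
  ultimately show ?thesis using DERIV_unique by blast
qed

lemma shift_deriv:
  fixes g :: "'a::euclidean_space \<Rightarrow> real"
  assumes "(g has_derivative f') (at x)" "\<And>y. g (y - c) = g y"
  shows "(g has_derivative f') (at (x + c))"
proof -
  have d1: "((\<lambda>y. y - c) has_derivative (\<lambda>h. h)) (at (x + c))" by (auto intro!: derivative_eq_intros)
  have d2: "(g has_derivative f') (at ((\<lambda>y. y - c) (x + c)))" using assms(1) by simp
  have "((\<lambda>y. g (y - c)) has_derivative f') (at (x + c))"
    using has_derivative_compose[OF d1 d2] by simp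
  then show ?thesis using assms(2) by simp
qed

lemma shift_inv_pd:
  fixes g :: "'a::euclidean_space \<Rightarrow> real"
  assumes "\<And>z t. g (z + t *\<^sub>R a) = g z"
  shows "pderiv_dir g b (z + t *\<^sub>R a) = pderiv_dir g b z"
proof -
  have m: "\<And>y. g (y - t *\<^sub>R a) = g y" using assms[of _ "-t"] by simp
  have p: "\<And>y. g (y - (- t *\<^sub>R a)) = g y" using assms by simp
  have "(\<lambda>f'. (g has_derivative f') (at (z + t *\<^sub>R a))) = (\<lambda>f'. (g has_derivative f') (at z))"
  proof (intro ext iffI)
    fix f' assume "(g has_derivative f') (at (z + t *\<^sub>R a))"
    from shift_deriv[OF this p] show "(g has_derivative f') (at z)" by simp
  next
    fix f' assume "(g has_derivative f') (at z)"
    from shift_deriv[OF this m] show "(g has_derivative f') (at (z + t *\<^sub>R a))" .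
  qed
  then show ?thesis unfolding pderiv_dir_def frechet_derivative_def by simp
qed

lemma wsum_differentiable:
  fixes G :: "'n \<Rightarrow> (real^'n) \<times> (real^'n) \<Rightarrow> real"
  assumes "\<And>k. G k differentiable (at z)"
  shows "(\<lambda>z. \<Sum>k\<in>UNIV. snd z $ k * G k z) differentiable (at z)"
proof -
  have sn: "(\<lambda>z. snd z $ k) differentiable (at z)" for k :: 'n
    unfolding differentiable_def
    by (intro exI[of _ "\<lambda>h. snd h $ k"] bounded_linear_imp_has_derivative bounded_linear_compose[OF bounded_linear_vec_nth]
        bounded_linear_snd)
  show ?thesis by (rule differentiable_sum) (auto intro!: differentiable_mult sn assms)
qed

lemma axis_sum: "(\<Sum>k\<in>UNIV. axis j (1::real) $ k * f k) = f j"
proof -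
  have "(\<Sum>k\<in>UNIV. axis j (1::real) $ k * f k) = (\<Sum>k\<in>UNIV. if k = j then f k else 0)"
    by (intro sum.cong) (auto simp: axis_def)
  then show ?thesis by simp
qed

theorem mainTheorem9:
  fixes F :: "(real^'n) \<times> (real^'n) \<Rightarrow> real"
  assumes "finsler_function F"
  shows "minkowski F \<longleftrightarrow>
    (\<forall>p v. v \<noteq> 0 \<longrightarrow> (\<forall>i.
       (\<Sum>k\<in>UNIV. pderiv_dir (pderiv_dir (\<lambda>z. (F z)\<^sup>2) (dy i)) (dx k) (p, v) * v$k)
       = 1/2 * (\<Sum>k\<in>UNIV. pderiv_dir (pderiv_dir (\<lambda>z. (F z)\<^sup>2) (dy k)) (dx i) (p, v) * v$k)))"
proof -
  define S where "S = (slit :: ((real^'n) \<times> (real^'n)) set)"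
  have oS: "open S" unfolding S_def by (rule open_slit)
  have inS: "(p, v) \<in> S \<longleftrightarrow> v \<noteq> 0" for p v unfolding S_def slit_def by simp
  have sF: "smooth_on S F" and pos: "\<And>p v. v \<noteq> 0 \<Longrightarrow> F (p, v) > 0"
    and hom: "\<And>p v c. c > 0 \<Longrightarrow> F (p, c *\<^sub>R v) = c * F (p, v)"
    using assms unfolding finsler_function_def S_def by blast+
  define L where "L = (\<lambda>z. (F z)\<^sup>2)"
  have sL: "smooth_on S L"
  proof -
    have "L = (\<lambda>x. F x * F x)" unfolding L_def by (simp add: power2_eq_square)
    then show ?thesis using smooth_mult[OF oS sF sF] by simp
  qed
  have homL: "\<And>p v c. c > 0 \<Longrightarrow> L (p, c *\<^sub>R v) = c^2 * L (p, v)"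
    unfolding L_def using hom by (simp add: power_mult_distrib)
  have dL: "\<And>z. z \<in> S \<Longrightarrow> L differentiable (at z)" using sL smooth_diff by blast
  have dL1: "\<And>z b. z \<in> S \<Longrightarrow> b \<in> Basis \<Longrightarrow> pderiv_dir L b differentiable (at z)"
    using sL smooth_diff smooth_pd by blast
  have dL2: "\<And>z b c. z \<in> S \<Longrightarrow> b \<in> Basis \<Longrightarrow> c \<in> Basis \<Longrightarrow>
      pderiv_dir (pderiv_dir L b) c differentiable (at z)"
    using sL smooth_diff smooth_pd by blast
  have sL1: "\<And>b. b \<in> Basis \<Longrightarrow> smooth_on S (pderiv_dir L b)" using sL smooth_pd by blast
  show ?thesis unfolding L_def[symmetric]
  proof
    assume mk: "minkowski F"
    have inv: "L (z + t *\<^sub>R dx k) = L z" for z t k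
    proof -
      obtain p v where z: "z = (p, v)" by (cases z)
      have "F (p + t *\<^sub>R axis k 1, v) = F (p, v)" using mk unfolding minkowski_def by blast
      then show ?thesis unfolding z L_def dx_def by simp
    qed
    have inv2: "pderiv_dir L (dy i) (z + t *\<^sub>R dx k) = pderiv_dir L (dy i) z" for z t k i
      by (rule shift_inv_pd) (rule inv)
    have zero: "pderiv_dir (pderiv_dir L (dy i)) (dx k) z = 0" if "z \<in> S" for z k i
      by (rule pd_zero_const) (use dL1[OF that dy_Basis] inv2 in auto)
    show "\<forall>p v. v \<noteq> 0 \<longrightarrow> (\<forall>i.
       (\<Sum>k\<in>UNIV. pderiv_dir (pderiv_dir L (dy i)) (dx k) (p, v) * v$k)
       = 1/2 * (\<Sum>k\<in>UNIV. pderiv_dir (pderiv_dir L (dy k)) (dx i) (p, v) * v$k))"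
      using zero inS by simp
  next
    assume cond: "\<forall>p v. v \<noteq> 0 \<longrightarrow> (\<forall>i.
       (\<Sum>k\<in>UNIV. pderiv_dir (pderiv_dir L (dy i)) (dx k) (p, v) * v$k)
       = 1/2 * (\<Sum>k\<in>UNIV. pderiv_dir (pderiv_dir L (dy k)) (dx i) (p, v) * v$k))"
    have E1: "(\<Sum>k\<in>UNIV. v$k * pderiv_dir L (dy k) (p,v)) = 2 * L (p,v)" if "v \<noteq> 0" for p v
    proof -
      have z: "(p,v) \<in> S" using inS that by simp
      have "((\<lambda>c. L ((p,0) + c *\<^sub>R (0,v))) has_real_derivative pderiv_dir L (0,v) ((p,0) + 1 *\<^sub>R (0,v))) (at 1)"
        by (rule line_deriv) (simp add: dL z)
      then have d1: "((\<lambda>c. L ((p,0) + c *\<^sub>R (0,v))) has_real_derivative frechet_derivative L (at (p,v)) (0,v)) (at 1)"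
        by (simp add: pderiv_dir_def)
      have d2: "((\<lambda>c. c^2 * L(p,v)) has_real_derivative (2 * L(p,v))) (at 1)"
        by (auto intro!: derivative_eq_intros)
      have d3: "((\<lambda>c. c^2 * L(p,v)) has_real_derivative frechet_derivative L (at (p,v)) (0,v)) (at 1)"
        by (rule has_field_derivative_transform_within_open[OF d1, of "{0<..}"]) (auto simp: homL)
      have "frechet_derivative L (at (p,v)) (0,v) = 2 * L(p,v)" using DERIV_unique[OF d3 d2] .
      then show ?thesis using fd_y[OF dL[OF z], of v] by simp
    qed
    have E2: "(\<Sum>k\<in>UNIV. v$k * pderiv_dir (pderiv_dir L (dy k)) (dx i) (p,v)) = 2 * pderiv_dir L (dx i) (p,v)"
      if "v \<noteq> 0" for p v i
    proof -
      have z: "(p,v) \<in> S" using inS that by simp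
      have eqS: "(\<Sum>k\<in>UNIV. snd x $ k * pderiv_dir L (dy k) x) = 2 * L x" if "x \<in> S" for x
        using E1[where p="fst x" and v="snd x"] that inS[of "fst x" "snd x"] by simp
      have "pderiv_dir (\<lambda>x. \<Sum>k\<in>UNIV. snd x $ k * pderiv_dir L (dy k) x) (dx i) (p,v)
          = pderiv_dir (\<lambda>x. 2 * L x) (dx i) (p,v)" by (rule pd_local[OF oS z eqS])
      moreover have "pderiv_dir (\<lambda>x. \<Sum>k\<in>UNIV. snd x $ k * pderiv_dir L (dy k) x) (dx i) (p,v)
          = (\<Sum>k\<in>UNIV. v$k * pderiv_dir (pderiv_dir L (dy k)) (dx i) (p,v))"
        by (subst pd_wsum) (auto simp: dL1[OF z dy_Basis] dx_def)
      moreover have "pderiv_dir (\<lambda>x. 2 * L x) (dx i) (p,v) = 2 * pderiv_dir L (dx i) (p,v)"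
        by (rule pd_cmult[OF dL[OF z]])
      ultimately show ?thesis by simp
    qed
    have C: "(\<Sum>k\<in>UNIV. v$k * pderiv_dir (pderiv_dir L (dy i)) (dx k) (p,v)) = pderiv_dir L (dx i) (p,v)"
      if "v \<noteq> 0" for p v i
    proof -
      have "(\<Sum>k\<in>UNIV. pderiv_dir (pderiv_dir L (dy i)) (dx k) (p, v) * v$k)
       = 1/2 * (\<Sum>k\<in>UNIV. pderiv_dir (pderiv_dir L (dy k)) (dx i) (p, v) * v$k)"
        using cond that by blast
      then show ?thesis using E2[OF that, of i] by (simp add: mult.commute)
    qed
    have key: "pderiv_dir (pderiv_dir L (dy i)) (dx j) z
       + (\<Sum>k\<in>UNIV. snd z $ k * pderiv_dir (pderiv_dir (pderiv_dir L (dy i)) (dx k)) (dy j) z)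
       - pderiv_dir (pderiv_dir L (dx i)) (dy j) z = 0" if z: "z \<in> S" for z i j
    proof -
      define Ci where "Ci = (\<lambda>x. (\<Sum>k\<in>UNIV. snd x $ k * pderiv_dir (pderiv_dir L (dy i)) (dx k) x)
          - pderiv_dir L (dx i) x)"
      have "Ci x = 0" if "x \<in> S" for x
        using C[where p="fst x" and v="snd x" and i=i] that inS[of "fst x" "snd x"] unfolding Ci_def by simp
      then have "pderiv_dir Ci (dy j) z = pderiv_dir (\<lambda>x. 0) (dy j) z"
        by (intro pd_local[OF oS z]) simp
      then have 0: "pderiv_dir Ci (dy j) z = 0" by (simp add: pd_const)
      have "pderiv_dir Ci (dy j) z = pderiv_dir (\<lambda>x. \<Sum>k\<in>UNIV. snd x $ k * pderiv_dir (pderiv_dir L (dy i)) (dx k) x) (dy j) z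
          - pderiv_dir (pderiv_dir L (dx i)) (dy j) z"
        unfolding Ci_def
        by (intro pd_diff wsum_differentiable dL2[OF z dy_Basis dx_Basis] dL1[OF z dx_Basis])
      also have "pderiv_dir (\<lambda>x. \<Sum>k\<in>UNIV. snd x $ k * pderiv_dir (pderiv_dir L (dy i)) (dx k) x) (dy j) z
          = (\<Sum>k\<in>UNIV. snd (dy j) $ k * pderiv_dir (pderiv_dir L (dy i)) (dx k) z
              + snd z $ k * pderiv_dir (pderiv_dir (pderiv_dir L (dy i)) (dx k)) (dy j) z)"
        by (intro pd_wsum dL2[OF z dy_Basis dx_Basis])
      also have "\<dots> = pderiv_dir (pderiv_dir L (dy i)) (dx j) z
              + (\<Sum>k\<in>UNIV. snd z $ k * pderiv_dir (pderiv_dir (pderiv_dir L (dy i)) (dx k)) (dy j) z)"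
        by (simp add: sum.distrib dy_def axis_sum)
      finally show ?thesis using 0 by simp
    qed
    have symA: "pderiv_dir (pderiv_dir L (dy i)) (dx j) z = pderiv_dir (pderiv_dir L (dy j)) (dx i) z"
      if z: "z \<in> S" for z i j
    proof -
      have s1: "pderiv_dir (pderiv_dir L (dx a)) (dy b) z = pderiv_dir (pderiv_dir L (dy b)) (dx a) z" for a b
        by (rule schwarz_smooth[OF oS z sL dx_Basis dy_Basis])
      have s2: "pderiv_dir (pderiv_dir (pderiv_dir L (dy a)) (dx k)) (dy b) z
          = pderiv_dir (pderiv_dir (pderiv_dir L (dy b)) (dy a)) (dx k) z" for a b k
      proof -
        have "pderiv_dir (pderiv_dir (pderiv_dir L (dy a)) (dx k)) (dy b) z
          = pderiv_dir (pderiv_dir (pderiv_dir L (dy a)) (dy b)) (dx k) z"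
          by (rule schwarz_smooth[OF oS z sL1[OF dy_Basis] dx_Basis dy_Basis])
        also have "\<dots> = pderiv_dir (pderiv_dir (pderiv_dir L (dy b)) (dy a)) (dx k) z"
          by (rule pd_local[OF oS z], rule schwarz_smooth[OF oS _ sL dy_Basis dy_Basis])
        finally show ?thesis .
      qed
      have s3: "pderiv_dir (pderiv_dir (pderiv_dir L (dy a)) (dy b)) (dx k) z
          = pderiv_dir (pderiv_dir (pderiv_dir L (dy b)) (dy a)) (dx k) z" for a b k
        by (rule pd_local[OF oS z], rule schwarz_smooth[OF oS _ sL dy_Basis dy_Basis])
      have T: "(\<Sum>k\<in>UNIV. snd z $ k * pderiv_dir (pderiv_dir (pderiv_dir L (dy i)) (dx k)) (dy j) z)
          = (\<Sum>k\<in>UNIV. snd z $ k * pderiv_dir (pderiv_dir (pderiv_dir L (dy j)) (dx k)) (dy i) z)"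
        using s2[of i _ j] s2[of j _ i] s3[of i j] by simp
      show ?thesis using key[OF z, of i j] key[OF z, of j i] s1[of i j] s1[of j i] T by linarith
    qed
    have Dx0: "pderiv_dir L (dx i) (p,v) = 0" if "v \<noteq> 0" for p v i
    proof -
      have z: "(p,v) \<in> S" using inS that by simp
      have "pderiv_dir L (dx i) (p,v) = (\<Sum>k\<in>UNIV. v$k * pderiv_dir (pderiv_dir L (dy i)) (dx k) (p,v))"
        using C[OF that] by simp
      also have "\<dots> = (\<Sum>k\<in>UNIV. v$k * pderiv_dir (pderiv_dir L (dy k)) (dx i) (p,v))"
        using symA[OF z] by simp
      also have "\<dots> = 2 * pderiv_dir L (dx i) (p,v)" by (rule E2[OF that])
      finally show ?thesis by simp
    qed
    show "minkowski F" unfolding minkowski_def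
    proof (intro allI)
      fix p q v
      show "F (p, v) = F (q, v)"
      proof (cases "v = 0")
        case True
        have "F (x, 0) = 0" for x using hom[where p=x and v=0 and c=2] by simp
        then show ?thesis using True by simp
      next
        case False
        have "((\<lambda>x. L (x, v)) has_derivative (\<lambda>h. 0)) (at x within UNIV)" for x
        proof -
          have z: "(x,v) \<in> S" using inS False by simp
          have d1: "((\<lambda>x. (x, v)) has_derivative (\<lambda>h. (h, 0))) (at x)"
            by (auto intro!: derivative_eq_intros)
          have d2: "(L has_derivative frechet_derivative L (at ((\<lambda>x. (x, v)) x))) (at ((\<lambda>x. (x, v)) x))"
            using frechet_derivative_works[THEN iffD1, OF dL[OF z]] by simp
          have "((\<lambda>x. L (x, v)) has_derivative (\<lambda>h. frechet_derivative L (at (x,v)) (h, 0))) (at x)"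
            using has_derivative_compose[OF d1 d2] by simp
          moreover have "(\<lambda>h. frechet_derivative L (at (x,v)) (h, 0)) = (\<lambda>h. 0)"
          proof
            fix h
            show "frechet_derivative L (at (x,v)) (h, 0) = 0"
              unfolding fd_x[OF dL[OF z]] using Dx0[OF False] by simp
          qed
          ultimately show ?thesis by simp
        qed
        then obtain c where "\<forall>x\<in>UNIV. L (x, v) = c"
          using has_derivative_zero_constant[OF convex_UNIV, of "\<lambda>x. L (x, v)"] by metis
        then have "L (p, v) = L (q, v)" by simp
        then have "(F (p, v))\<^sup>2 = (F (q, v))\<^sup>2" unfolding L_def .
        then show ?thesis using pos[OF False, of p] pos[OF False, of q]
          using power2_eq_imp_eq less_imp_le by metis
      qed
    qed
  qed
qed

end
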